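(* Let $\{p^\circ_{(R,\alpha)}\}_{(R,\alpha)}$ be a replacement rule satisfying the Fixation Axiom and representing neutral drift. Then $\hat\Delta_{\mathrm{sel}}(\mathbf{x})=0$ for every state $\mathbf{x}\in\{0,1\}^G$. Furthermore, if $(\tilde v_g)_{g\in G}$ is any collection of real weights such that $$\tilde\Delta_{\mathrm{sel}}(\mathbf{x}):=\sum_{g,h\in G}x_g\big(e^\circ_{gh}\tilde v_h-e^\circ_{hg}\tilde v_g\big)=0\quad\text{for every state }\mathbf{x},$$ then $(\tilde v_g)_{g\in G}$ is a constant multiple of $(v_g)_{g\in G}$.
   Context: Setting. $G$ is a finite nonempty set of genetic sites, $n=|G|$; a state is $\mathbf{x}\in\{0,1\}^G$. A replacement event is $(R,\alpha)$ with $R\subseteq G$, $\alpha:R\to G$; a replacement rule gives for each state a probability distribution $\{p_{(R,\alpha)}(\mathbf{x})\}$ over events. The rule represents neutral drift if $p_{(R,\alpha)}(\mathbf{x})=p^\circ_{(R,\alpha)}$ is independent of $\mathbf{x}$ for every event. Fixation Axiom: there exist $g\in G$, $m\ge1$, events $(R_k,\alpha_k)_{k=1}^m$ with $p_{(R_k,\alpha_k)}>0$, $g\in R_k$ for some $k$, and $\tilde\alpha_1\circ\cdots\circ\tilde\alpha_m(h)=g$ for all $h\in G$, where $\tilde\alpha_k$ equals $\alpha_k$ on $R_k$ and the identity elsewhere. Quantities: $e^\circ_{gh}=\sum_{(R,\alpha):h\in R,\alpha(h)=g}p^\circ_{(R,\alpha)}$, $d^\circ_g=\sum_he^\circ_{hg}$.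 Reproductive values $(v_g)$: the unique solution of $d^\circ_gv_g=\sum_he^\circ_{gh}v_h$ for all $g\in G$ and $\sum_gv_g=n$. $\hat b_g=\sum_he^\circ_{gh}v_h$, $\hat d_g=v_gd^\circ_g$, $\hat\Delta_{\mathrm{sel}}(\mathbf{x})=\sum_gx_g(\hat b_g-\hat d_g)$. *)

theory Defs
  imports Complex_Main "HOL-Library.FuncSet"
begin

text \<open>A replacement event (R, alpha): R a subset of G, alpha : R -> G, represented
  as an extensional function on R (value undefined outside R).\<close>
type_synonym 'g event = "'g set \<times> ('g \<Rightarrow> 'g)"

definition events :: "'g set \<Rightarrow> 'g event set" where
  "events G = {(R, \<alpha>). R \<subseteq> G \<and> \<alpha> \<in> R \<rightarrow>\<^sub>E G}"

definition states :: "'g set \<Rightarrow> ('g \<Rightarrow> real) set" where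
  "states G = G \<rightarrow>\<^sub>E {0, 1}"

definition event_distribution :: "'g set \<Rightarrow> ('g event \<Rightarrow> real) \<Rightarrow> bool" where
  "event_distribution G q \<longleftrightarrow>
     (\<forall>E. 0 \<le> q E) \<and> (\<forall>E. E \<notin> events G \<longrightarrow> q E = 0) \<and> (\<Sum>E\<in>events G. q E) = 1"

definition replacement_rule :: "'g set \<Rightarrow> (('g \<Rightarrow> real) \<Rightarrow> 'g event \<Rightarrow> real) \<Rightarrow> bool" where
  "replacement_rule G p \<longleftrightarrow> (\<forall>x\<in>states G. event_distribution G (p x))"

definition neutral_drift ::
  "'g set \<Rightarrow> (('g \<Rightarrow> real) \<Rightarrow> 'g event \<Rightarrow> real) \<Rightarrow> ('g event \<Rightarrow> real) \<Rightarrow> bool" where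
  "neutral_drift G p p0 \<longleftrightarrow> (\<forall>x\<in>states G. \<forall>E. p x E = p0 E)"

definition tilde :: "'g event \<Rightarrow> 'g \<Rightarrow> 'g" where
  "tilde E h = (if h \<in> fst E then snd E h else h)"

text \<open>Fixation Axiom: tilde alpha_1 o ... o tilde alpha_m (list [E_1,...,E_m]).\<close>
definition fixation_axiom :: "'g set \<Rightarrow> (('g \<Rightarrow> real) \<Rightarrow> 'g event \<Rightarrow> real) \<Rightarrow> bool" where
  "fixation_axiom G p \<longleftrightarrow>
     (\<exists>g\<in>G. \<exists>Es :: 'g event list. length Es \<ge> 1 \<and>
        (\<forall>E\<in>set Es. E \<in> events G \<and> (\<forall>x\<in>states G. p x E > 0)) \<and>
        (\<exists>E\<in>set Es. g \<in> fst E) \<and>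
        (\<forall>h\<in>G. foldr (\<lambda>E f. tilde E \<circ> f) Es id h = g))"

definition e0 :: "'g set \<Rightarrow> ('g event \<Rightarrow> real) \<Rightarrow> 'g \<Rightarrow> 'g \<Rightarrow> real" where
  "e0 G p0 g h = (\<Sum>E\<in>{E\<in>events G. h \<in> fst E \<and> snd E h = g}. p0 E)"

definition d0 :: "'g set \<Rightarrow> ('g event \<Rightarrow> real) \<Rightarrow> 'g \<Rightarrow> real" where
  "d0 G p0 g = (\<Sum>h\<in>G. e0 G p0 h g)"

definition repro_values :: "'g set \<Rightarrow> ('g event \<Rightarrow> real) \<Rightarrow> 'g \<Rightarrow> real" where
  "repro_values G p0 = (THE v. v \<in> extensional G \<and>
      (\<forall>g\<in>G. d0 G p0 g * v g = (\<Sum>h\<in>G. e0 G p0 g h * v h)) \<and>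
      (\<Sum>g\<in>G. v g) = real (card G))"

definition b_hat :: "'g set \<Rightarrow> ('g event \<Rightarrow> real) \<Rightarrow> 'g \<Rightarrow> real" where
  "b_hat G p0 g = (\<Sum>h\<in>G. e0 G p0 g h * repro_values G p0 h)"

definition d_hat :: "'g set \<Rightarrow> ('g event \<Rightarrow> real) \<Rightarrow> 'g \<Rightarrow> real" where
  "d_hat G p0 g = repro_values G p0 g * d0 G p0 g"

definition Delta_sel_hat :: "'g set \<Rightarrow> ('g event \<Rightarrow> real) \<Rightarrow> ('g \<Rightarrow> real) \<Rightarrow> real" where
  "Delta_sel_hat G p0 x = (\<Sum>g\<in>G. x g * (b_hat G p0 g - d_hat G p0 g))"

end

theory Submission imports Defs "Jordan_Normal_Form.Determinant" begin

lemma kernel_exists: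
  fixes G :: "'g set" and a :: "'g \<Rightarrow> 'g \<Rightarrow> real"
  assumes fin: "finite G" and ne: "G \<noteq> {}" and col: "\<And>h. h \<in> G \<Longrightarrow> (\<Sum>g\<in>G. a g h) = 0"
  shows "\<exists>v. (\<exists>h\<in>G. v h \<noteq> 0) \<and> (\<forall>g\<in>G. (\<Sum>h\<in>G. a g h * v h) = 0)"
proof -
  obtain xs where xs: "set xs = G" "distinct xs" using finite_distinct_list[OF fin] by blast
  define n where "n = length xs"
  have bij: "bij_betw ((!) xs) {..<n} G" using bij_betw_nth[OF xs(2) _ xs(1)[symmetric]] n_def by simp
  have re: "(\<Sum>h\<in>G. f h) = (\<Sum>i<n. f (xs ! i))" for f :: "'g \<Rightarrow> real"
    using sum.reindex_bij_betw[OF bij, of f] by simp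
  define M where "M = mat n n (\<lambda>(i,j). a (xs!i) (xs!j))"
  have M: "M \<in> carrier_mat n n" unfolding M_def by simp
  have MT: "transpose_mat M \<in> carrier_mat n n" using M by simp
  have "transpose_mat M *\<^sub>v vec n (\<lambda>_. 1) = 0\<^sub>v n"
  proof (rule eq_vecI)
    fix i assume i: "i < dim_vec (0\<^sub>v n :: real vec)"
    hence i: "i < n" by simp
    have "(transpose_mat M *\<^sub>v vec n (\<lambda>_. 1)) $ i = (\<Sum>j<n. a (xs!j) (xs!i))"
      using i by (simp add: M_def scalar_prod_def lessThan_atLeast0)
    also have "\<dots> = (\<Sum>g\<in>G. a g (xs!i))" by (rule re[symmetric])
    also have "\<dots> = 0" using col i xs(1) n_def by auto
    finally show "(transpose_mat M *\<^sub>v vec n (\<lambda>_. 1)) $ i = 0\<^sub>v n $ i" using i by simp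
  qed (simp add: M_def)
  moreover have "vec n (\<lambda>_. 1) \<noteq> (0\<^sub>v n :: real vec)"
  proof -
    have "n > 0" using ne xs(1) n_def by auto
    thus ?thesis by (metis index_vec index_zero_vec(1) zero_neq_one)
  qed
  ultimately have "det (transpose_mat M) = 0"
    using det_0_iff_vec_prod_zero_field[OF MT] by (metis vec_carrier)
  hence "det M = 0" using det_transpose[OF M] by simp
  then obtain w where w: "w \<in> carrier_vec n" "w \<noteq> 0\<^sub>v n" "M *\<^sub>v w = 0\<^sub>v n"
    using det_0_iff_vec_prod_zero_field[OF M] by auto
  define v where "v h = w $ (inv_into {..<n} ((!) xs) h)" for h :: 'g
  have vi: "v (xs!i) = w $ i" if "i < n" for i
    using that bij by (simp add: v_def bij_betw_def inv_into_f_f)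
  have "\<exists>i<n. w $ i \<noteq> 0"
    using w(1,2) by (metis eq_vecI carrier_vecD index_zero_vec(1,2))
  then obtain i where i: "i < n" "w $ i \<noteq> 0" by blast
  have ex: "\<exists>h\<in>G. v h \<noteq> 0"
    using i vi xs(1) n_def by (metis nth_mem)
  have "\<forall>g\<in>G. (\<Sum>h\<in>G. a g h * v h) = 0"
  proof
    fix g assume g: "g \<in> G"
    then obtain i where i: "i < n" "g = xs ! i" using xs(1) n_def by (metis in_set_conv_nth)
    have "(\<Sum>h\<in>G. a g h * v h) = (\<Sum>j<n. a (xs!i) (xs!j) * w $ j)"
      using re[of "\<lambda>h. a g h * v h"] vi i by simp
    also have "\<dots> = (M *\<^sub>v w) $ i"
      using i w(1) by (simp add: M_def scalar_prod_def lessThan_atLeast0)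
    also have "\<dots> = 0" using w(3) i by simp
    finally show "(\<Sum>h\<in>G. a g h * v h) = 0" .
  qed
  with ex show ?thesis by blast
qed

definition Kern :: "'g set \<Rightarrow> ('g \<Rightarrow> 'g \<Rightarrow> real) \<Rightarrow> ('g \<Rightarrow> real) \<Rightarrow> bool" where
  "Kern G e v \<longleftrightarrow> (\<forall>g\<in>G. (\<Sum>h\<in>G. e h g) * v g = (\<Sum>h\<in>G. e g h * v h))"

lemma Kern_abs:
  fixes e :: "'g \<Rightarrow> 'g \<Rightarrow> real"
  assumes fin: "finite G" and nn: "\<And>g h. 0 \<le> e g h" and K: "Kern G e v"
  shows "Kern G e (\<lambda>h. \<bar>v h\<bar>)"
proof -
  define d where "d g = (\<Sum>h\<in>G. e h g)" for g
  have dnn: "0 \<le> d g" for g unfolding d_def using nn by (simp add: sum_nonneg)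
  have le: "d g * \<bar>v g\<bar> \<le> (\<Sum>h\<in>G. e g h * \<bar>v h\<bar>)" if g: "g \<in> G" for g
  proof -
    have "d g * \<bar>v g\<bar> = \<bar>d g * v g\<bar>" using dnn by (simp add: abs_mult)
    also have "\<dots> = \<bar>\<Sum>h\<in>G. e g h * v h\<bar>" using K g unfolding Kern_def d_def by simp
    also have "\<dots> \<le> (\<Sum>h\<in>G. \<bar>e g h * v h\<bar>)" by (rule sum_abs)
    also have "\<dots> = (\<Sum>h\<in>G. e g h * \<bar>v h\<bar>)" using nn by (simp add: abs_mult)
    finally show ?thesis .
  qed
  have "(\<Sum>g\<in>G. (\<Sum>h\<in>G. e g h * \<bar>v h\<bar>) - d g * \<bar>v g\<bar>) =
        (\<Sum>g\<in>G. \<Sum>h\<in>G. e g h * \<bar>v h\<bar>) - (\<Sum>g\<in>G. d g * \<bar>v g\<bar>)"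
    by (simp add: sum_subtractf)
  also have "(\<Sum>g\<in>G. \<Sum>h\<in>G. e g h * \<bar>v h\<bar>) = (\<Sum>h\<in>G. \<Sum>g\<in>G. e g h * \<bar>v h\<bar>)"
    by (rule sum.swap)
  also have "\<dots> = (\<Sum>h\<in>G. d h * \<bar>v h\<bar>)" unfolding d_def by (simp add: sum_distrib_right)
  finally have "(\<Sum>g\<in>G. (\<Sum>h\<in>G. e g h * \<bar>v h\<bar>) - d g * \<bar>v g\<bar>) = 0" by simp
  hence "\<forall>g\<in>G. (\<Sum>h\<in>G. e g h * \<bar>v h\<bar>) - d g * \<bar>v g\<bar> = 0"
    using sum_nonneg_eq_0_iff[OF fin] le by (smt (verit, ccfv_SIG))
  thus ?thesis unfolding Kern_def d_def by simp
qed

lemma Kern_lin: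
  assumes "Kern G e u" "Kern G e v"
  shows "Kern G e (\<lambda>h. v h - c * u h)"
  unfolding Kern_def
proof
  fix g assume g: "g \<in> G"
  have "(\<Sum>h\<in>G. e g h * (v h - c * u h)) = (\<Sum>h\<in>G. e g h * v h) - c * (\<Sum>h\<in>G. e g h * u h)"
    by (simp add: right_diff_distrib sum_subtractf sum_distrib_left mult.left_commute)
  also have "\<dots> = (\<Sum>h\<in>G. e h g) * v g - c * ((\<Sum>h\<in>G. e h g) * u g)"
    using assms g unfolding Kern_def by simp
  finally show "(\<Sum>h\<in>G. e h g) * (v g - c * u g) = (\<Sum>h\<in>G. e g h * (v h - c * u h))"
    by (simp add: algebra_simps)
qed


lemma Kern_scale:
  assumes "Kern G e v" shows "Kern G e (\<lambda>h. c * v h)"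
  unfolding Kern_def
proof
  fix g assume g: "g \<in> G"
  have "(\<Sum>h\<in>G. e g h * (c * v h)) = c * (\<Sum>h\<in>G. e g h * v h)"
    by (simp add: sum_distrib_left mult.left_commute)
  also have "\<dots> = c * ((\<Sum>h\<in>G. e h g) * v g)" using assms g unfolding Kern_def by simp
  finally show "(\<Sum>h\<in>G. e h g) * (c * v g) = (\<Sum>h\<in>G. e g h * (c * v h))"
    by (simp add: mult.left_commute)
qed

lemma Kern_cong:
  assumes "\<And>h. h \<in> G \<Longrightarrow> u h = v h" shows "Kern G e u = Kern G e v"
  unfolding Kern_def using assms by (auto intro!: sum.cong)

lemma Kern_zero:
  fixes e :: "'g \<Rightarrow> 'g \<Rightarrow> real"
  assumes fin: "finite G" and nn: "\<And>g h. 0 \<le> e g h"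
    and Z: "\<And>w. Kern G e w \<Longrightarrow> (\<forall>h\<in>G. 0 \<le> w h) \<Longrightarrow> w g0 = 0 \<Longrightarrow> (\<forall>h\<in>G. w h = 0)"
    and K: "Kern G e v" and v0: "v g0 = 0"
  shows "\<forall>h\<in>G. v h = 0"
  using Z[OF Kern_abs[OF fin nn K]] v0 by simp

lemma Kern_uniq:
  fixes e :: "'g \<Rightarrow> 'g \<Rightarrow> real"
  assumes fin: "finite G" and nn: "\<And>g h. 0 \<le> e g h"
    and Z: "\<And>w. Kern G e w \<Longrightarrow> (\<forall>h\<in>G. 0 \<le> w h) \<Longrightarrow> w g0 = 0 \<Longrightarrow> (\<forall>h\<in>G. w h = 0)"
    and Ku: "Kern G e u" and Kv: "Kern G e v" and u0: "u g0 \<noteq> 0"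
  shows "\<forall>h\<in>G. v h = (v g0 / u g0) * u h"
proof -
  have "\<forall>h\<in>G. v h - (v g0 / u g0) * u h = 0"
    by (rule Kern_zero[OF fin nn Z Kern_lin[OF Ku Kv]]) (use u0 in auto)
  thus ?thesis by simp
qed

theorem theorem6:
  fixes G :: "'g set"
    and p :: "('g \<Rightarrow> real) \<Rightarrow> 'g event \<Rightarrow> real"
    and p0 :: "'g event \<Rightarrow> real"
  assumes "finite G" and "G \<noteq> {}"
    and "replacement_rule G p"
    and "neutral_drift G p p0"
    and "fixation_axiom G p"
  shows "(\<forall>x\<in>states G. Delta_sel_hat G p0 x = 0) \<and>
         (\<forall>vt :: 'g \<Rightarrow> real.
            (\<forall>x\<in>states G. (\<Sum>g\<in>G. \<Sum>h\<in>G. x g * (e0 G p0 g h * vt h - e0 G p0 h g * vt g)) = 0)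
            \<longrightarrow> (\<exists>c::real. \<forall>g\<in>G. vt g = c * repro_values G p0 g))"
proof -
  note fin = assms(1) and ne = assms(2)
  define e where "e = e0 G p0"
  define x0 where "x0 = (\<lambda>h\<in>G. 0::real)"
  have x0: "x0 \<in> states G" unfolding x0_def states_def by auto
  have px0: "p x0 E = p0 E" for E using assms(4) x0 unfolding neutral_drift_def by blast
  have dist: "event_distribution G p0"
    using assms(3) x0 px0 unfolding replacement_rule_def by (metis ext)
  have p0nn: "0 \<le> p0 E" for E using dist unfolding event_distribution_def by blast
  have evfin: "finite (events G)"
  proof -
    have "events G = (\<Union>R\<in>Pow G. (\<lambda>\<alpha>. (R,\<alpha>)) ` (R \<rightarrow>\<^sub>E G))"
      unfolding events_def by auto
    thus ?thesis using fin by (auto intro!: finite_PiE finite_subset[OF _ fin])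
  qed
  have nn: "0 \<le> e g h" for g h unfolding e_def e0_def by (rule sum_nonneg) (simp add: p0nn)
  have Kd: "Kern G e v \<longleftrightarrow> (\<forall>g\<in>G. d0 G p0 g * v g = (\<Sum>h\<in>G. e0 G p0 g h * v h))" for v
    unfolding Kern_def d0_def e_def by simp
  have tG: "tilde E y \<in> G" if "E \<in> events G" "y \<in> G" for E y
    using that unfolding tilde_def events_def by (auto simp: PiE_iff)
  have step: "w y = 0" if K: "Kern G e w" and wnn: "\<forall>h\<in>G. 0 \<le> w h" and E: "E \<in> events G"
    and pE: "p0 E > 0" and y: "y \<in> G" and wt: "w (tilde E y) = 0" for w E y
  proof (cases "y \<in> fst E")
    case False thus ?thesis using wt unfolding tilde_def by simp
  next
    case True
    define g where "g = snd E y"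
    have tg: "tilde E y = g" using True unfolding tilde_def g_def by simp
    have g: "g \<in> G" using tG[OF E y] tg by simp
    have "(\<Sum>h\<in>G. e g h * w h) = 0" using K g wt tg unfolding Kern_def by (metis mult_zero_right)
    hence "\<forall>h\<in>G. e g h * w h = 0"
      using sum_nonneg_eq_0_iff[OF fin, of "\<lambda>h. e g h * w h"] nn wnn by (simp add: mult_nonneg_nonneg)
    hence ey: "e g y * w y = 0" using y by blast
    have "p0 E \<le> e g y" unfolding e_def e0_def
      by (rule member_le_sum) (use E True g_def p0nn evfin in auto)
    hence "e g y > 0" using pE by simp
    thus ?thesis using ey by simp
  qed
  obtain g0 Es where g0: "g0 \<in> G"
    and Es: "\<forall>E\<in>set Es. E \<in> events G \<and> (\<forall>x\<in>states G. p x E > 0)"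
    and fx: "\<forall>h\<in>G. foldr (\<lambda>E f. tilde E \<circ> f) Es id h = g0"
    using assms(5) unfolding fixation_axiom_def by blast
  have Es': "\<forall>E\<in>set Es. E \<in> events G \<and> p0 E > 0" using Es x0 px0 by metis
  have Z: "\<forall>h\<in>G. w h = 0" if K: "Kern G e w" and wnn: "\<forall>h\<in>G. 0 \<le> w h" and w0: "w g0 = 0" for w
  proof -
    have ind: "\<forall>y\<in>G. foldr (\<lambda>E f. tilde E \<circ> f) Fs id y \<in> G \<and>
                 (w (foldr (\<lambda>E f. tilde E \<circ> f) Fs id y) = 0 \<longrightarrow> w y = 0)"
      if "\<forall>E\<in>set Fs. E \<in> events G \<and> p0 E > 0" for Fs
      using that
    proof (induction Fs)
      case Nil thus ?case by simp
    next
      case (Cons E Fs)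
      show ?case
      proof
        fix y assume y: "y \<in> G"
        let ?z = "foldr (\<lambda>E f. tilde E \<circ> f) Fs id y"
        have pr: "\<forall>E\<in>set Fs. E \<in> events G \<and> p0 E > 0" using Cons.prems by simp
        have zz: "?z \<in> G \<and> (w ?z = 0 \<longrightarrow> w y = 0)" using Cons.IH[OF pr] y by (rule bspec)
        have z: "?z \<in> G" "w ?z = 0 \<longrightarrow> w y = 0" using zz by auto
        have eq: "foldr (\<lambda>E f. tilde E \<circ> f) (E # Fs) id y = tilde E ?z" by simp
        have E: "E \<in> events G" "p0 E > 0" using Cons.prems by auto
        show "foldr (\<lambda>E f. tilde E \<circ> f) (E # Fs) id y \<in> G \<and>
          (w (foldr (\<lambda>E f. tilde E \<circ> f) (E # Fs) id y) = 0 \<longrightarrow> w y = 0)"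
          unfolding eq using z tG[OF E(1) z(1)] step[OF K wnn E(1) E(2) z(1)] by blast
      qed
    qed
    show ?thesis using ind[OF Es'] fx w0 by auto
  qed
  note Zr = Z[rule_format]
  have uniq: "\<forall>h\<in>G. v h = (v g0 / u g0) * u h" if "Kern G e u" "Kern G e v" "u g0 \<noteq> 0" for u v
    by (rule Kern_uniq[OF fin nn _ that]) (use Z in blast)
  have nz: "v g0 \<noteq> 0" if K: "Kern G e v" and ex: "\<exists>h\<in>G. v h \<noteq> 0" for v
    using Kern_zero[OF fin nn _ K] Z ex by blast
  define P where "P v \<longleftrightarrow> v \<in> extensional G \<and>
      (\<forall>g\<in>G. d0 G p0 g * v g = (\<Sum>h\<in>G. e0 G p0 g h * v h)) \<and>
      (\<Sum>g\<in>G. v g) = real (card G)" for v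
  have cardpos: "real (card G) > 0" using fin ne by (simp add: card_gt_0_iff)
  obtain v where Kv: "Kern G e v" and vne: "\<exists>h\<in>G. v h \<noteq> 0"
  proof -
    have col: "(\<Sum>g\<in>G. e g h - (if g = h then (\<Sum>k\<in>G. e k h) else 0)) = 0" if "h \<in> G" for h
      using that fin by (simp add: sum_subtractf)
    obtain v where v: "\<exists>h\<in>G. v h \<noteq> 0"
      "\<forall>g\<in>G. (\<Sum>h\<in>G. (e g h - (if g = h then (\<Sum>k\<in>G. e k h) else 0)) * v h) = 0"
      using kernel_exists[OF fin ne, of "\<lambda>g h. e g h - (if g = h then (\<Sum>k\<in>G. e k h) else 0)"] col
      by blast
    have "Kern G e v" unfolding Kern_def
    proof
      fix g assume g: "g \<in> G"
      have "(\<Sum>h\<in>G. (e g h - (if g = h then (\<Sum>k\<in>G. e k h) else 0)) * v h)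
          = (\<Sum>h\<in>G. e g h * v h) - (\<Sum>h\<in>G. (if g = h then (\<Sum>k\<in>G. e k h) * v h else 0))"
        by (subst sum_subtractf[symmetric]) (rule sum.cong, auto simp: algebra_simps)
      also have "(\<Sum>h\<in>G. (if g = h then (\<Sum>k\<in>G. e k h) * v h else 0)) = (\<Sum>k\<in>G. e k g) * v g"
        using g fin by simp
      finally show "(\<Sum>h\<in>G. e h g) * v g = (\<Sum>h\<in>G. e g h * v h)" using v(2) g by simp
    qed
    thus ?thesis using that v(1) by blast
  qed
  define a where "a h = \<bar>v h\<bar>" for h
  have Ka: "Kern G e a" unfolding a_def by (rule Kern_abs[OF fin nn Kv])
  define S where "S = (\<Sum>h\<in>G. a h)"
  have Spos: "S > 0"
  proof -
    obtain h where h: "h \<in> G" "v h \<noteq> 0" using vne by blast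
    have "a h \<le> S" unfolding S_def by (rule member_le_sum) (use h fin a_def in auto)
    moreover have "a h > 0" using h a_def by simp
    ultimately show ?thesis by simp
  qed
  define r where "r = restrict (\<lambda>h. real (card G) / S * a h) G"
  have Kr: "Kern G e r"
  proof -
    have "Kern G e (\<lambda>h. real (card G) / S * a h)" by (rule Kern_scale[OF Ka])
    moreover have "Kern G e r = Kern G e (\<lambda>h. real (card G) / S * a h)"
      by (rule Kern_cong) (simp add: r_def)
    ultimately show ?thesis by simp
  qed
  have Pr: "P r"
  proof -
    have "(\<Sum>g\<in>G. r g) = real (card G) / S * S" unfolding r_def S_def
      by (simp add: sum_distrib_left)
    thus ?thesis unfolding P_def using Kr Kd Spos by (auto simp: r_def)
  qed
  have PU: "w = r" if "P w" for w
  proof -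
    have Kw: "Kern G e w" and sw: "(\<Sum>g\<in>G. w g) = real (card G)" and ew: "w \<in> extensional G"
      using that unfolding P_def Kd by auto
    have wne: "\<exists>h\<in>G. w h \<noteq> 0"
    proof (rule ccontr)
      assume "\<not> ?thesis" hence "(\<Sum>g\<in>G. w g) = 0" by simp
      thus False using sw cardpos by simp
    qed
    have w0: "w g0 \<noteq> 0" by (rule nz[OF Kw wne])
    have eq: "\<forall>h\<in>G. r h = (r g0 / w g0) * w h" by (rule uniq[OF Kw Kr w0])
    have "real (card G) = (\<Sum>h\<in>G. r h)" using Pr unfolding P_def by simp
    also have "\<dots> = (\<Sum>h\<in>G. (r g0 / w g0) * w h)" by (rule sum.cong) (use eq in auto)
    also have "\<dots> = (r g0 / w g0) * real (card G)" using sw by (simp only: sum_distrib_left[symmetric])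
    finally have "real (card G) = (r g0 / w g0) * real (card G)" .
    hence c1: "r g0 / w g0 = 1" using cardpos by (metis mult_cancel_right1 less_irrefl)
    show ?thesis
    proof (rule extensionalityI[OF ew])
      show "r \<in> extensional G" using Pr unfolding P_def by simp
      fix h assume "h \<in> G" thus "w h = r h" using eq c1 by simp
    qed
  qed
  have RV: "repro_values G p0 = r"
    unfolding repro_values_def P_def[symmetric]
    by (rule the_equality[of P, OF Pr PU])
  have KRV: "Kern G e (repro_values G p0)" using RV Kr by simp
  have RV0: "repro_values G p0 g0 \<noteq> 0"
  proof -
    have "\<exists>h\<in>G. r h \<noteq> 0"
    proof (rule ccontr)
      assume "\<not> ?thesis" hence "(\<Sum>g\<in>G. r g) = 0" by simp
      thus False using Pr cardpos unfolding P_def by simp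
    qed
    thus ?thesis using nz[OF Kr] RV by simp
  qed
  show ?thesis
  proof
    show "\<forall>x\<in>states G. Delta_sel_hat G p0 x = 0"
      using KRV unfolding Kd Delta_sel_hat_def b_hat_def d_hat_def
      by (simp add: mult.commute)
  next
    show "\<forall>vt :: 'g \<Rightarrow> real.
            (\<forall>x\<in>states G. (\<Sum>g\<in>G. \<Sum>h\<in>G. x g * (e0 G p0 g h * vt h - e0 G p0 h g * vt g)) = 0)
            \<longrightarrow> (\<exists>c::real. \<forall>g\<in>G. vt g = c * repro_values G p0 g)"
    proof (intro allI impI)
      fix vt :: "'g \<Rightarrow> real"
      assume H: "\<forall>x\<in>states G. (\<Sum>g\<in>G. \<Sum>h\<in>G. x g * (e0 G p0 g h * vt h - e0 G p0 h g * vt g)) = 0"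
      have "Kern G e vt" unfolding Kern_def
      proof
        fix g assume g: "g \<in> G"
        define x where "x = (\<lambda>k\<in>G. if k = g then 1 else (0::real))"
        have x: "x \<in> states G" unfolding x_def states_def by auto
        have "(\<Sum>k\<in>G. \<Sum>h\<in>G. x k * (e0 G p0 k h * vt h - e0 G p0 h k * vt k))
             = (\<Sum>k\<in>G. if k = g then (\<Sum>h\<in>G. e0 G p0 k h * vt h - e0 G p0 h k * vt k) else 0)"
          by (rule sum.cong) (auto simp: x_def)
        also have "\<dots> = (\<Sum>h\<in>G. e0 G p0 g h * vt h - e0 G p0 h g * vt g)" using g fin by simp
        also have "\<dots> = (\<Sum>h\<in>G. e g h * vt h) - (\<Sum>h\<in>G. e h g) * vt g"
          unfolding e_def by (simp add: sum_subtractf sum_distrib_right)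
        finally show "(\<Sum>h\<in>G. e h g) * vt g = (\<Sum>h\<in>G. e g h * vt h)" using H x by simp
      qed
      from uniq[OF KRV this RV0] show "\<exists>c. \<forall>g\<in>G. vt g = c * repro_values G p0 g" by blast
    qed
  qed
qed

end
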